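(* Let $\{U_n\}_{n\ge1}$ be a $*$-submixing sequence adapted to a filtration $\{\mathcal{F}_n\}_{n\ge1}$ with $\mathbb{E}(U_n)=0$ and $\mathbb{E}(U_n^2)<\infty$ for all $n$. Let $\{b_n\}$ be positive constants increasing to $\infty$ such that $\sum_{n=1}^\infty b_n^{-2}\mathbb{E}(U_n^2)<\infty$ and $\sup_n b_n^{-1}\sum_{i=1}^n\mathbb{E}|U_i|<\infty$. Then $b_n^{-1}\sum_{i=1}^nU_i\to0$ almost surely.
   Context: A sequence $\{U_n\}_{n\ge1}$ is $*$-submixing adapted to $\{\mathcal{F}_n\}$ if $U_n$ is $\mathcal{F}_n$-measurable for each $n$ and there exist a positive integer $N$ and a non-negative function $f$ on the integers $n\ge N$ with $f(n)\to0$ as $n\to\infty$ such that for all $n\ge N$ and $m\ge1$, almost surely, $|\mathbb{E}(U_{n+m}|\mathcal{F}_m)-\mathbb{E}(U_{n+m})|\le f(n)\,\mathbb{E}|U_{n+m}|$. *)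

theory Defs
  imports "HOL-Probability.Probability"
begin

definition is_filtration :: "'a measure \<Rightarrow> (nat \<Rightarrow> 'a measure) \<Rightarrow> bool" where
  "is_filtration M F \<longleftrightarrow>
     (\<forall>n\<ge>1. subalgebra M (F n)) \<and>
     (\<forall>n m. 1 \<le> n \<longrightarrow> n \<le> m \<longrightarrow> sets (F n) \<subseteq> sets (F m))"

definition star_submixing ::
  "'a measure \<Rightarrow> (nat \<Rightarrow> 'a measure) \<Rightarrow> (nat \<Rightarrow> 'a \<Rightarrow> real) \<Rightarrow> bool" where
  "star_submixing M F U \<longleftrightarrow>
     (\<forall>n\<ge>1. U n \<in> borel_measurable (F n)) \<and>
     (\<exists>(N::nat) (f::nat \<Rightarrow> real). N \<ge> 1 \<and> (\<forall>n\<ge>N. f n \<ge> 0) \<and> f \<longlonglongrightarrow> 0 \<and>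
        (\<forall>n m. n \<ge> N \<longrightarrow> m \<ge> 1 \<longrightarrow>
           (AE x in M. \<bar>real_cond_exp M (F m) (U (n + m)) x - (\<integral>y. U (n + m) y \<partial>M)\<bar>
                        \<le> f n * (\<integral>y. \<bar>U (n + m) y\<bar> \<partial>M))))"

end

theory Submission
  imports Defs
begin


lemma weighted_to_zero:
  fixes b r :: "nat \<Rightarrow> real"
  assumes bpos: "\<And>n. b n > 0" and inc: "incseq b" and binf: "filterlim b at_top sequentially"
    and r: "r \<longlonglongrightarrow> 0"
  shows "(\<lambda>n. (\<Sum>t<n. (b (Suc t) - b t) * r (Suc t)) / b n) \<longlonglongrightarrow> 0"
proof (rule LIMSEQ_I)
  fix e :: real assume e: "e > 0"
  have w0: "\<And>t. b (Suc t) - b t \<ge> 0" using inc by (simp add: incseq_Suc_iff)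
  obtain T where T: "\<And>t. t \<ge> T \<Longrightarrow> \<bar>r t\<bar> < e/2"
    using LIMSEQ_D[OF r, of "e/2"] e by auto
  define K where "K = (\<Sum>t<T. (b (Suc t) - b t) * \<bar>r (Suc t)\<bar>)"
  have K0: "K \<ge> 0" unfolding K_def using w0 by (auto intro!: sum_nonneg)
  have "\<forall>\<^sub>F n in sequentially. b n > 2 * K / e"
    using binf by (simp add: filterlim_at_top_dense)
  then obtain n1 where n1: "\<And>n. n \<ge> n1 \<Longrightarrow> b n > 2 * K / e"
    by (auto simp: eventually_sequentially)
  show "\<exists>no. \<forall>n\<ge>no. norm ((\<Sum>t<n. (b (Suc t) - b t) * r (Suc t)) / b n - 0) < e"
  proof (intro exI allI impI)
    fix n assume n: "n \<ge> n1"
    have "\<bar>\<Sum>t<n. (b (Suc t) - b t) * r (Suc t)\<bar> \<le> (\<Sum>t<n. (b (Suc t) - b t) * \<bar>r (Suc t)\<bar>)"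
      by (rule order_trans[OF sum_abs]) (simp add: abs_mult abs_of_nonneg[OF w0])
    also have "\<dots> \<le> (\<Sum>t<n. (if t < T then (b (Suc t) - b t) * \<bar>r (Suc t)\<bar> else 0) + (b (Suc t) - b t) * (e/2))"
    proof (rule sum_mono)
      fix t assume "t \<in> {..<n}"
      show "(b (Suc t) - b t) * \<bar>r (Suc t)\<bar> \<le> (if t < T then (b (Suc t) - b t) * \<bar>r (Suc t)\<bar> else 0) + (b (Suc t) - b t) * (e/2)"
      proof (cases "t < T")
        case True then show ?thesis using w0[of t] e by (simp add: mult_nonneg_nonneg)
      next
        case False then have "\<bar>r (Suc t)\<bar> < e/2" using T by simp
        then have "(b (Suc t) - b t) * \<bar>r (Suc t)\<bar> \<le> (b (Suc t) - b t) * (e/2)"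
          using w0[of t] by (intro mult_left_mono) auto
        then show ?thesis using False by simp
      qed
    qed
    also have "\<dots> = (\<Sum>t<n. (if t < T then (b (Suc t) - b t) * \<bar>r (Suc t)\<bar> else 0)) + (e/2) * (\<Sum>t<n. (b (Suc t) - b t))"
      by (simp add: sum.distrib sum_distrib_left mult.commute)
    also have "(\<Sum>t<n. (b (Suc t) - b t)) = b n - b 0" by (rule sum_lessThan_telescope)
    also have "(\<Sum>t<n. (if t < T then (b (Suc t) - b t) * \<bar>r (Suc t)\<bar> else 0)) \<le> K"
    proof -
      have "(\<Sum>t<n. (if t < T then (b (Suc t) - b t) * \<bar>r (Suc t)\<bar> else 0))
          = (\<Sum>t\<in>{..<n} \<inter> {..<T}. (b (Suc t) - b t) * \<bar>r (Suc t)\<bar>)"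
        by (simp add: sum.If_cases lessThan_def)
      also have "\<dots> \<le> K" unfolding K_def
        using w0 by (intro sum_mono2) (auto simp del: diff_ge_0_iff_ge)
      finally show ?thesis .
    qed
    finally have A: "\<bar>\<Sum>t<n. (b (Suc t) - b t) * r (Suc t)\<bar> \<le> K + e/2 * (b n - b 0)"
      using e by simp
    have bn: "b n > 2 * K / e" using n1 n by simp
    have "K < e/2 * b n" using bn e by (simp add: field_simps)
    then have "\<bar>\<Sum>t<n. (b (Suc t) - b t) * r (Suc t)\<bar> < e * b n"
      proof -
      have "e/2 * (b n - b 0) \<le> e/2 * b n" using e bpos[of 0] by simp
      then show ?thesis using A \<open>K < e/2 * b n\<close> by linarith
    qed
    then show "norm ((\<Sum>t<n. (b (Suc t) - b t) * r (Suc t)) / b n - 0) < e"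
      using bpos[of n] by (simp add: abs_div pos_divide_less_eq)
  qed
qed

lemma kronecker:
  fixes a b :: "nat \<Rightarrow> real"
  assumes bpos: "\<And>n. b n > 0" and inc: "incseq b" and binf: "filterlim b at_top sequentially"
    and sm: "summable (\<lambda>t. a t / b t)"
  shows "(\<lambda>n. (\<Sum>t\<le>n. a t) / b n) \<longlonglongrightarrow> 0"
proof -
  define r where "r n = (\<Sum>t<n. a t / b t) - suminf (\<lambda>t. a t / b t)" for n
  have r: "r \<longlonglongrightarrow> 0" unfolding r_def
    using tendsto_diff[OF summable_LIMSEQ[OF sm] tendsto_const[of "suminf (\<lambda>t. a t / b t)"]] by simp
  have ar: "a t = b t * (r (Suc t) - r t)" for t
    unfolding r_def using bpos[of t] by simp
  have abel: "(\<Sum>t\<le>n. b t * (r (Suc t) - r t)) = b n * r (Suc n) - b 0 * r 0 - (\<Sum>t<n. (b (Suc t) - b t) * r (Suc t))" for n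
    by (induction n) (simp_all add: algebra_simps)
  have eq: "(\<Sum>t\<le>n. a t) / b n = r (Suc n) - b 0 * r 0 / b n - (\<Sum>t<n. (b (Suc t) - b t) * r (Suc t)) / b n" for n
    using bpos[of n] by (simp add: ar abel diff_divide_distrib)
  have t1: "(\<lambda>n. r (Suc n)) \<longlonglongrightarrow> 0" using r by (rule LIMSEQ_Suc)
  have binv: "(\<lambda>n. inverse (b n)) \<longlonglongrightarrow> 0"
    using binf by (rule tendsto_inverse_0_at_top)
  have t2: "(\<lambda>n. b 0 * r 0 / b n) \<longlonglongrightarrow> 0"
    using tendsto_mult[OF tendsto_const[of "b 0 * r 0"] binv] by (simp add: divide_inverse)
  have t3: "(\<lambda>n. (\<Sum>t<n. (b (Suc t) - b t) * r (Suc t)) / b n) \<longlonglongrightarrow> 0" by (rule weighted_to_zero[OF bpos inc binf r])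
  show ?thesis unfolding eq using tendsto_diff[OF tendsto_diff[OF t1 t2] t3] by simp
qed


lemma abs_mult_le_sq: fixes a b :: real shows "\<bar>a * b\<bar> \<le> a\<^sup>2 + b\<^sup>2"
proof -
  have "0 \<le> (\<bar>a\<bar> - \<bar>b\<bar>)\<^sup>2" by simp
  then have "2 * (\<bar>a\<bar> * \<bar>b\<bar>) \<le> \<bar>a\<bar>\<^sup>2 + \<bar>b\<bar>\<^sup>2" by (simp add: power2_eq_square algebra_simps)
  then have "2 * (\<bar>a\<bar> * \<bar>b\<bar>) \<le> a\<^sup>2 + b\<^sup>2" by simp
  moreover have "0 \<le> \<bar>a\<bar> * \<bar>b\<bar>" by simp
  moreover have "0 \<le> a\<^sup>2 + b\<^sup>2" by simp
  ultimately show ?thesis unfolding abs_mult by linarith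
qed

lemma sq_int_prod:
  fixes f g :: "'a \<Rightarrow> real" and M :: "'a measure"
  assumes "f \<in> borel_measurable M" "g \<in> borel_measurable M"
    "integrable M (\<lambda>x. (f x)\<^sup>2)" "integrable M (\<lambda>x. (g x)\<^sup>2)"
  shows "integrable M (\<lambda>x. f x * g x)"
  by (rule Bochner_Integration.integrable_bound[where f="\<lambda>x. (f x)\<^sup>2 + (g x)\<^sup>2"])
     (use assms abs_mult_le_sq in auto)

lemma sq_int_add:
  fixes f g :: "'a \<Rightarrow> real" and M :: "'a measure"
  assumes "f \<in> borel_measurable M" "g \<in> borel_measurable M"
    "integrable M (\<lambda>x. (f x)\<^sup>2)" "integrable M (\<lambda>x. (g x)\<^sup>2)"
  shows "integrable M (\<lambda>x. (f x + g x)\<^sup>2)"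
proof -
  have "integrable M (\<lambda>x. (f x)\<^sup>2 + (g x)\<^sup>2 + 2 * (f x * g x))"
    using sq_int_prod[OF assms] assms by auto
  then show ?thesis by (simp add: power2_sum mult.assoc)
qed

lemma sq_int_diff:
  fixes f g :: "'a \<Rightarrow> real" and M :: "'a measure"
  assumes "f \<in> borel_measurable M" "g \<in> borel_measurable M"
    "integrable M (\<lambda>x. (f x)\<^sup>2)" "integrable M (\<lambda>x. (g x)\<^sup>2)"
  shows "integrable M (\<lambda>x. (f x - g x)\<^sup>2)"
  using sq_int_add[of f M "\<lambda>x. - g x"] assms by simp

lemma sq_int_sum:
  fixes f :: "'i \<Rightarrow> 'a \<Rightarrow> real" and M :: "'a measure"
  assumes "\<And>i. i \<in> I \<Longrightarrow> f i \<in> borel_measurable M" "\<And>i. i \<in> I \<Longrightarrow> integrable M (\<lambda>x. (f i x)\<^sup>2)"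
  shows "integrable M (\<lambda>x. (\<Sum>i\<in>I. f i x)\<^sup>2)"
  using assms
proof (induction I rule: infinite_finite_induct)
  case (insert i I)
  then show ?case by (simp add: sq_int_add borel_measurable_sum)
qed simp_all

lemma (in prob_space) sq_int_integrable:
  fixes f :: "'a \<Rightarrow> real"
  assumes "f \<in> borel_measurable M" "integrable M (\<lambda>x. (f x)\<^sup>2)"
  shows "integrable M f"
proof (rule Bochner_Integration.integrable_bound[where f="\<lambda>x. 1 + (f x)\<^sup>2"])
  show "integrable M (\<lambda>x. 1 + (f x)\<^sup>2)" using assms by simp
  show "AE x in M. norm (f x) \<le> norm (1 + (f x)\<^sup>2)"
  proof (intro AE_I2)
    fix x
    have "\<bar>f x\<bar> \<le> 1 + (f x)\<^sup>2"
    proof (cases "\<bar>f x\<bar> \<le> 1")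
      case True then show ?thesis by (smt (verit) zero_le_power2)
    next
      case False then have "\<bar>f x\<bar> * 1 \<le> \<bar>f x\<bar> * \<bar>f x\<bar>" by (intro mult_left_mono) auto
      then show ?thesis by (simp add: power2_eq_square abs_mult_self_eq)
    qed
    then show "norm (f x) \<le> norm (1 + (f x)\<^sup>2)" by simp
  qed
qed (use assms in auto)

lemma prob_sfs: "prob_space M \<Longrightarrow> subalgebra M F \<Longrightarrow> sigma_finite_subalgebra M F"
  by (simp add: finite_measure_subalgebra.intro finite_measure_subalgebra_axioms.intro
      finite_measure_subalgebra_is_sigma_finite prob_space.finite_measure)

lemma measurable_mono_sets:
  "sets A \<subseteq> sets B \<Longrightarrow> space A = space B \<Longrightarrow> f \<in> measurable A N \<Longrightarrow> f \<in> measurable B N"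
  unfolding measurable_def by auto

lemma orth:
  assumes P: "prob_space M" and G: "subalgebra M G"
    and Y: "Y \<in> borel_measurable G" "integrable M (\<lambda>x. (Y x)\<^sup>2)"
    and d: "d \<in> borel_measurable M" "integrable M (\<lambda>x. (d x)\<^sup>2)"
    and ce: "AE x in M. real_cond_exp M G d x = 0"
  shows "(\<integral>x. Y x * d x \<partial>M) = 0"
proof -
  interpret sigma_finite_subalgebra M G by (rule prob_sfs[OF P G])
  have YM: "Y \<in> borel_measurable M" by (rule measurable_from_subalg[OF G Y(1)])
  have i: "integrable M (\<lambda>x. Y x * d x)" by (rule sq_int_prod[OF YM d(1) Y(2) d(2)])
  have "(\<integral>x. Y x * d x \<partial>M) = (\<integral>x. Y x * real_cond_exp M G d x \<partial>M)"
    using real_cond_exp_intg(2)[OF i Y(1) d(1)] by simp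
  also have "\<dots> = (\<integral>x. 0 \<partial>M)"
    by (rule integral_cong_AE) (use ce YM in auto)
  finally show ?thesis by simp
qed


lemma pred_allless:
  fixes l :: nat
  assumes "\<And>r. r < l \<Longrightarrow> {x\<in>space N. P r x} \<in> sets N"
  shows "{x\<in>space N. \<forall>r<l. P r x} \<in> sets N"
  using assms
proof (induction l)
  case 0 then show ?case by simp
next
  case (Suc l)
  have "{x\<in>space N. \<forall>r<Suc l. P r x} = {x\<in>space N. \<forall>r<l. P r x} \<inter> {x\<in>space N. P l x}"
    by (auto simp: less_Suc_eq)
  then show ?case using Suc by auto
qed

lemma intind: fixes f :: "'a \<Rightarrow> real"
  shows "A \<in> sets M \<Longrightarrow> integrable M f \<Longrightarrow> integrable M (\<lambda>x. indicator A x * f x)"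
  using integrable_real_mult_indicator[of A M f] by (simp add: mult.commute)

locale mds = prob_space M for M :: "'a measure" +
  fixes G :: "nat \<Rightarrow> 'a measure" and d :: "nat \<Rightarrow> 'a \<Rightarrow> real"
  assumes subG: "\<And>i. subalgebra M (G i)"
    and monoG: "\<And>i. sets (G i) \<subseteq> sets (G (Suc i))"
    and dmeas: "\<And>i. d i \<in> borel_measurable (G i)"
    and dsq: "\<And>i. integrable M (\<lambda>x. (d i x)\<^sup>2)"
    and dce: "\<And>i. AE x in M. real_cond_exp M (G i) (d (Suc i)) x = 0"
begin

definition S :: "nat \<Rightarrow> 'a \<Rightarrow> real" where "S l x = (\<Sum>i<l. d i x)"

lemma S0[simp]: "S 0 x = 0" by (simp add: S_def)

lemma spaceG: "space (G i) = space M" using subG[of i] by (simp add: subalgebra_def)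

lemma measG: "f \<in> borel_measurable (G i) \<Longrightarrow> i \<le> j \<Longrightarrow> f \<in> borel_measurable (G j)"
  by (rule measurable_mono_sets[OF lift_Suc_mono_le[of "\<lambda>i. sets (G i)", OF monoG]])
     (auto simp: spaceG)

lemma toM: "f \<in> borel_measurable (G i) \<Longrightarrow> f \<in> borel_measurable M"
  by (rule measurable_from_subalg[OF subG])

lemma dM: "d i \<in> borel_measurable M" by (rule toM[OF dmeas])

lemma S_meas: "l \<le> Suc j \<Longrightarrow> S l \<in> borel_measurable (G j)"
  unfolding S_def by (rule borel_measurable_sum) (auto intro: measG[OF dmeas])

lemma SM: "S l \<in> borel_measurable M" by (rule toM[OF S_meas[of l l]]) simp

lemma Ssq: "integrable M (\<lambda>x. (S l x)\<^sup>2)"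
  unfolding S_def by (rule sq_int_sum) (auto simp: dM dsq)

lemma orth_gen:
  assumes "Y \<in> borel_measurable (G j)" "integrable M (\<lambda>x. (Y x)\<^sup>2)" "j < i"
  shows "(\<integral>x. Y x * d i x \<partial>M) = 0"
proof -
  obtain k where i: "i = Suc k" and jk: "j \<le> k" using assms(3) by (cases i) auto
  show ?thesis unfolding i
    by (rule orth[OF prob_space_axioms subG measG[OF assms(1) jk] assms(2) dM dsq dce])
qed

lemma S_diff: "l \<le> n \<Longrightarrow> S n x - S l x = (\<Sum>i\<in>{l..<n}. d i x)"
proof -
  assume "l \<le> n"
  then have "{..<n} = {..<l} \<union> {l..<n}" by auto
  moreover have "(\<Sum>i\<in>{..<l} \<union> {l..<n}. d i x) = (\<Sum>i<l. d i x) + (\<Sum>i\<in>{l..<n}. d i x)"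
    by (rule sum.union_disjoint) auto
  ultimately have "(\<Sum>i<n. d i x) = (\<Sum>i<l. d i x) + (\<Sum>i\<in>{l..<n}. d i x)" by simp
  then show ?thesis unfolding S_def by simp
qed

lemma orth_sum:
  assumes Y: "Y \<in> borel_measurable (G j)" "integrable M (\<lambda>x. (Y x)\<^sup>2)" and "j < l" "l \<le> n"
  shows "(\<integral>x. Y x * (S n x - S l x) \<partial>M) = 0"
proof -
  have YM: "Y \<in> borel_measurable M" by (rule toM[OF Y(1)])
  have "(\<integral>x. Y x * (S n x - S l x) \<partial>M) = (\<integral>x. (\<Sum>i\<in>{l..<n}. Y x * d i x) \<partial>M)"
    using assms by (simp add: S_diff sum_distrib_left)
  also have "\<dots> = (\<Sum>i\<in>{l..<n}. (\<integral>x. Y x * d i x \<partial>M))"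
    by (rule Bochner_Integration.integral_sum) (rule sq_int_prod[OF YM dM Y(2) dsq])
  also have "\<dots> = 0" using orth_gen[OF Y] assms(3) by simp
  finally show ?thesis .
qed

lemma ES2: "(\<integral>x. (S n x)\<^sup>2 \<partial>M) = (\<Sum>i<n. (\<integral>x. (d i x)\<^sup>2 \<partial>M))"
proof (induction n)
  case 0 then show ?case by simp
next
  case (Suc n)
  have eq: "(S (Suc n) x)\<^sup>2 = (S n x)\<^sup>2 + 2 * (S n x * d n x) + (d n x)\<^sup>2" for x
    by (simp add: S_def power2_sum)
  have o: "(\<integral>x. S n x * d n x \<partial>M) = 0"
  proof (cases n)
    case 0 then show ?thesis by simp
  next
    case (Suc k)
    show ?thesis by (rule orth_gen[OF S_meas[of n k] Ssq]) (use Suc in auto)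
  qed
  have i1: "integrable M (\<lambda>x. S n x * d n x)" by (rule sq_int_prod[OF SM dM Ssq dsq])
  have "(\<integral>x. (S (Suc n) x)\<^sup>2 \<partial>M) = (\<integral>x. (S n x)\<^sup>2 \<partial>M) + 2 * (\<integral>x. S n x * d n x \<partial>M) + (\<integral>x. (d n x)\<^sup>2 \<partial>M)"
    unfolding eq using Ssq i1 dsq by simp
  then show ?case using Suc o by simp
qed

lemma kolm:
  assumes e: "e > 0"
  shows "prob {x\<in>space M. \<exists>l\<le>n. e \<le> \<bar>S l x\<bar>} \<le> (\<Sum>i<n. (\<integral>x. (d i x)\<^sup>2 \<partial>M)) / e\<^sup>2"
proof -
  define A where "A l = {x\<in>space M. e \<le> \<bar>S l x\<bar> \<and> (\<forall>r<l. \<bar>S r x\<bar> < e)}" for l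
  have A0: "A 0 = {}" using e by (auto simp: A_def)
  have AG: "A (Suc k) \<in> sets (G k)" for k
  proof -
    have eqA: "A (Suc k) = {x\<in>space (G k). e \<le> \<bar>S (Suc k) x\<bar>} \<inter> {x\<in>space (G k). \<forall>r<Suc k. \<bar>S r x\<bar> < e}"
      unfolding A_def spaceG by blast
    have m1[measurable]: "S (Suc k) \<in> borel_measurable (G k)" by (rule S_meas) simp
    have s1: "{x\<in>space (G k). e \<le> \<bar>S (Suc k) x\<bar>} \<in> sets (G k)" by measurable
    have s2: "{x\<in>space (G k). \<forall>r<Suc k. \<bar>S r x\<bar> < e} \<in> sets (G k)"
    proof (rule pred_allless)
      fix r assume "r < Suc k"
      then have [measurable]: "S r \<in> borel_measurable (G k)" by (intro S_meas) auto
      show "{x \<in> space (G k). \<bar>S r x\<bar> < e} \<in> sets (G k)" by measurable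
    qed
    show ?thesis unfolding eqA using s1 s2 by (rule sets.Int)
  qed
  have AM: "A l \<in> sets M" for l
  proof (cases l)
    case 0 then show ?thesis using A0 by simp
  next
    case (Suc k) then show ?thesis using AG[of k] subG[of k] by (auto simp: subalgebra_def)
  qed
  define U where "U = {x\<in>space M. \<exists>l\<le>n. e \<le> \<bar>S l x\<bar>}"
  have UA: "U = (\<Union>l\<in>{..n}. A l)"
  proof
    show "U \<subseteq> (\<Union>l\<in>{..n}. A l)"
    proof
      fix x assume "x \<in> U"
      then obtain l where l: "l \<le> n" "e \<le> \<bar>S l x\<bar>" and x: "x \<in> space M" by (auto simp: U_def)
      define l0 where "l0 = (LEAST l. e \<le> \<bar>S l x\<bar>)"
      have l0: "e \<le> \<bar>S l0 x\<bar>" unfolding l0_def by (rule LeastI[of _ l]) (rule l(2))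
      have l0l: "l0 \<le> l" unfolding l0_def by (rule Least_le) (rule l(2))
      have "\<forall>r<l0. \<bar>S r x\<bar> < e" unfolding l0_def using not_less_Least by force
      then have "x \<in> A l0" using l0 x by (auto simp: A_def)
      then show "x \<in> (\<Union>l\<in>{..n}. A l)" using l0l l(1) by auto
    qed
    show "(\<Union>l\<in>{..n}. A l) \<subseteq> U" by (auto simp: U_def A_def)
  qed
  have disj: "disjoint_family_on A {..n}"
    unfolding disjoint_family_on_def
  proof (intro ballI impI)
    fix l l' :: nat assume "l \<noteq> l'"
    then consider "l < l'" | "l' < l" by linarith
    then show "A l \<inter> A l' = {}"
      by cases (auto simp: A_def)
  qed
  have int_ind: "integrable M (\<lambda>x. indicator (A l) x * (S m x)\<^sup>2)" for l m
    by (rule intind[OF AM Ssq])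
  have key: "e\<^sup>2 * prob (A l) \<le> (\<integral>x. indicator (A l) x * (S n x)\<^sup>2 \<partial>M)" if "l \<le> n" for l
  proof (cases l)
    case 0 then show ?thesis using A0 by simp
  next
    case (Suc k)
    have "e\<^sup>2 * prob (A l) = (\<integral>x. indicator (A l) x * e\<^sup>2 \<partial>M)"
      using AM[of l] by simp
    also have "\<dots> \<le> (\<integral>x. indicator (A l) x * (S l x)\<^sup>2 \<partial>M)"
    proof (rule integral_mono)
      show "integrable M (\<lambda>x. indicator (A l) x * e\<^sup>2)" using AM[of l] by (intro intind) auto
      show "integrable M (\<lambda>x. indicator (A l) x * (S l x)\<^sup>2)" by (rule int_ind)
      fix x assume "x \<in> space M"
      show "indicator (A l) x * e\<^sup>2 \<le> indicator (A l) x * (S l x)\<^sup>2"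
      proof (cases "x \<in> A l")
        case True
        then have "e \<le> \<bar>S l x\<bar>" by (simp add: A_def)
        then have "e\<^sup>2 \<le> \<bar>S l x\<bar>\<^sup>2" using e by (intro power_mono) auto
        then show ?thesis using True by simp
      qed simp
    qed
    also have "\<dots> \<le> (\<integral>x. indicator (A l) x * (S n x)\<^sup>2 \<partial>M)"
    proof -
      define Y where "Y x = indicator (A l) x * S l x" for x
      have YG: "Y \<in> borel_measurable (G k)"
        unfolding Y_def using AG[of k] S_meas[of l k] Suc
        by (intro borel_measurable_times borel_measurable_indicator) auto
      have YM: "Y \<in> borel_measurable M" by (rule toM[OF YG])
      have Ysq: "integrable M (\<lambda>x. (Y x)\<^sup>2)"
      proof -
        have "(\<lambda>x. (Y x)\<^sup>2) = (\<lambda>x. indicator (A l) x * (S l x)\<^sup>2)"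
          by (auto simp: Y_def indicator_def power2_eq_square)
        then show ?thesis using int_ind by simp
      qed
      have o: "(\<integral>x. Y x * (S n x - S l x) \<partial>M) = 0"
        by (rule orth_sum[OF YG Ysq]) (use Suc that in auto)
      have iY: "integrable M (\<lambda>x. Y x * (S n x - S l x))"
        by (rule sq_int_prod[OF YM _ Ysq sq_int_diff[OF SM SM Ssq Ssq]]) (use SM in auto)
      have "(\<integral>x. indicator (A l) x * (S l x)\<^sup>2 \<partial>M)
          = (\<integral>x. indicator (A l) x * (S l x)\<^sup>2 + 2 * (Y x * (S n x - S l x)) \<partial>M)"
        using int_ind iY o by simp
      also have "\<dots> \<le> (\<integral>x. indicator (A l) x * (S n x)\<^sup>2 \<partial>M)"
      proof (rule integral_mono)
        show "integrable M (\<lambda>x. indicator (A l) x * (S l x)\<^sup>2 + 2 * (Y x * (S n x - S l x)))"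
          using int_ind iY by simp
        show "integrable M (\<lambda>x. indicator (A l) x * (S n x)\<^sup>2)" by (rule int_ind)
        fix x
        have "indicator (A l) x * (S n x)\<^sup>2 - (indicator (A l) x * (S l x)\<^sup>2 + 2 * (Y x * (S n x - S l x)))
            = indicator (A l) x * (S n x - S l x)\<^sup>2"
          by (simp add: Y_def power2_eq_square algebra_simps)
        moreover have "0 \<le> indicator (A l) x * (S n x - S l x)\<^sup>2" by simp
        ultimately show "indicator (A l) x * (S l x)\<^sup>2 + 2 * (Y x * (S n x - S l x)) \<le> indicator (A l) x * (S n x)\<^sup>2"
          by linarith
      qed
      finally show ?thesis .
    qed
    finally show ?thesis .
  qed
  have "e\<^sup>2 * prob U = e\<^sup>2 * (\<Sum>l\<in>{..n}. prob (A l))"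
    unfolding UA using disj AM by (subst finite_measure_finite_Union) auto
  also have "\<dots> = (\<Sum>l\<in>{..n}. e\<^sup>2 * prob (A l))" by (simp add: sum_distrib_left)
  also have "\<dots> \<le> (\<Sum>l\<in>{..n}. (\<integral>x. indicator (A l) x * (S n x)\<^sup>2 \<partial>M))"
    by (rule sum_mono) (use key in auto)
  also have "\<dots> = (\<integral>x. (\<Sum>l\<in>{..n}. indicator (A l) x * (S n x)\<^sup>2) \<partial>M)"
    by (rule Bochner_Integration.integral_sum[symmetric]) (rule int_ind)
  also have "\<dots> = (\<integral>x. indicator U x * (S n x)\<^sup>2 \<partial>M)"
    unfolding UA by (simp add: indicator_UN_disjoint[OF _ disj] sum_distrib_right)
  also have "\<dots> \<le> (\<integral>x. (S n x)\<^sup>2 \<partial>M)"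
  proof (rule integral_mono)
    have "U \<in> sets M" unfolding UA using AM by auto
    then show "integrable M (\<lambda>x. indicator U x * (S n x)\<^sup>2)" by (rule intind[OF _ Ssq])
    show "integrable M (\<lambda>x. (S n x)\<^sup>2)" by (rule Ssq)
    fix x show "indicator U x * (S n x)\<^sup>2 \<le> (S n x)\<^sup>2"
      by (auto simp: indicator_def)
  qed
  also have "\<dots> = (\<Sum>i<n. (\<integral>x. (d i x)\<^sup>2 \<partial>M))" by (rule ES2)
  finally have "e\<^sup>2 * prob U \<le> (\<Sum>i<n. (\<integral>x. (d i x)\<^sup>2 \<partial>M))" .
  then show ?thesis unfolding U_def[symmetric] using e by (simp add: field_simps)
qed



lemma shift: "mds M (\<lambda>i. G (m+i)) (\<lambda>i. d (m+i))"
  by unfold_locales (use subG dmeas dsq dce in \<open>auto simp: monoG\<close>)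

lemma shift_S: "mds.S (\<lambda>i. d (m+i)) l x = S (m+l) x - S m x"
proof -
  have "S (m+l) x - S m x = (\<Sum>i\<in>{m..<m+l}. d i x)" by (rule S_diff) simp
  also have "\<dots> = (\<Sum>i<l. d (m+i) x)"
    by (rule sum.reindex_bij_witness[where j="\<lambda>i. i - m" and i="\<lambda>i. m + i"]) auto
  finally show ?thesis by (simp add: mds.S_def[OF shift])
qed

lemma tail_bound:
  assumes e: "e > 0" and sm: "summable (\<lambda>i. (\<integral>x. (d i x)\<^sup>2 \<partial>M))"
  shows "prob {x\<in>space M. \<exists>l. e \<le> \<bar>S (m+l) x - S m x\<bar>}
     \<le> (suminf (\<lambda>i. (\<integral>x. (d i x)\<^sup>2 \<partial>M)) - (\<Sum>i<m. (\<integral>x. (d i x)\<^sup>2 \<partial>M))) / e\<^sup>2"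
proof -
  let ?f = "\<lambda>i. (\<integral>x. (d i x)\<^sup>2 \<partial>M)"
  define B where "B n = {x\<in>space M. \<exists>l\<le>n. e \<le> \<bar>S (m+l) x - S m x\<bar>}" for n
  have [measurable]: "S l \<in> borel_measurable M" for l by (rule SM)
  have BM: "B n \<in> sets M" for n
  proof -
    have "B n = (\<Union>l\<in>{..n}. {x\<in>space M. e \<le> \<bar>S (m+l) x - S m x\<bar>})"
      by (auto simp: B_def)
    also have "\<dots> \<in> sets M" by (intro sets.finite_UN) auto
    finally show ?thesis .
  qed
  have inc: "incseq B" by (auto simp: incseq_def B_def) (meson order_trans)
  have un: "(\<Union>n. B n) = {x\<in>space M. \<exists>l. e \<le> \<bar>S (m+l) x - S m x\<bar>}"
    by (auto simp: B_def)
  have bnd: "prob (B n) \<le> (suminf ?f - (\<Sum>i<m. ?f i)) / e\<^sup>2" for n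
  proof -
    have "prob (B n) \<le> (\<Sum>i<n. ?f (m+i)) / e\<^sup>2"
      using mds.kolm[OF shift e, of n m] unfolding shift_S B_def by simp
    also have "(\<Sum>i<n. ?f (m+i)) = (\<Sum>i<m+n. ?f i) - (\<Sum>i<m. ?f i)"
    proof -
      have "(\<Sum>i<m+n. ?f i) = (\<Sum>i<m. ?f i) + (\<Sum>i<n. ?f (m+i))"
        by (induction n) (simp_all add: ac_simps)
      then show ?thesis by simp
    qed
    also have "(\<Sum>i<m+n. ?f i) \<le> suminf ?f"
      by (rule sum_le_suminf[OF sm]) auto
    finally show ?thesis using e by (simp add: divide_right_mono)
  qed
  have "(\<lambda>n. prob (B n)) \<longlonglongrightarrow> prob (\<Union>n. B n)"
    by (rule finite_Lim_measure_incseq) (use BM inc in auto)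
  then have "prob (\<Union>n. B n) \<le> (suminf ?f - (\<Sum>i<m. ?f i)) / e\<^sup>2"
    by (rule LIMSEQ_le_const2) (use bnd in auto)
  then show ?thesis unfolding un .
qed

lemma conv:
  assumes sm: "summable (\<lambda>i. (\<integral>x. (d i x)\<^sup>2 \<partial>M))"
  shows "AE x in M. convergent (\<lambda>n. S n x)"
proof -
  let ?f = "\<lambda>i. (\<integral>x. (d i x)\<^sup>2 \<partial>M)"
  define \<sigma> where "\<sigma> m = suminf ?f - (\<Sum>i<m. ?f i)" for m
  have \<sigma>0: "\<sigma> \<longlonglongrightarrow> 0" unfolding \<sigma>_def
    using tendsto_diff[OF tendsto_const[of "suminf ?f"] summable_LIMSEQ[OF sm]] by simp
  have [measurable]: "S l \<in> borel_measurable M" for l by (rule SM)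
  define N where "N q = {x\<in>space M. \<forall>m. \<exists>l. 1/(Suc q) \<le> \<bar>S (m+l) x - S m x\<bar>}" for q :: nat
  have Nnull: "N q \<in> null_sets M" for q
  proof -
    let ?e = "1 / real (Suc q)"
    have e: "?e > 0" by simp
    have NM: "N q \<in> sets M" unfolding N_def by measurable
    have le: "prob (N q) \<le> \<sigma> m / ?e\<^sup>2" for m
    proof -
      have "prob (N q) \<le> prob {x\<in>space M. \<exists>l. ?e \<le> \<bar>S (m+l) x - S m x\<bar>}"
        by (rule finite_measure_mono) (auto simp: N_def)
      also have "\<dots> \<le> \<sigma> m / ?e\<^sup>2" unfolding \<sigma>_def by (rule tail_bound[OF e sm])
      finally show ?thesis .
    qed
    have "(\<lambda>m. \<sigma> m / ?e\<^sup>2) \<longlonglongrightarrow> 0 / ?e\<^sup>2"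
      by (intro tendsto_divide \<sigma>0 tendsto_const) simp
    then have "prob (N q) \<le> 0"
      by (intro LIMSEQ_le_const[of "\<lambda>m. \<sigma> m / ?e\<^sup>2"]) (use le in auto)
    then have "prob (N q) = 0" using measure_nonneg[of M "N q"] by linarith
    then show ?thesis using NM by (auto simp: emeasure_eq_measure)
  qed
  show ?thesis
  proof (rule AE_I')
    show "(\<Union>q. N q) \<in> null_sets M" using Nnull by auto
    show "{x \<in> space M. \<not> convergent (\<lambda>n. S n x)} \<subseteq> (\<Union>q. N q)"
    proof
      fix x assume x: "x \<in> {x \<in> space M. \<not> convergent (\<lambda>n. S n x)}"
      show "x \<in> (\<Union>q. N q)"
      proof (rule ccontr)
        assume "x \<notin> (\<Union>q. N q)"
        then have H: "\<And>q. \<exists>m. \<forall>l. \<bar>S (m+l) x - S m x\<bar> < 1 / Suc q"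
          using x by (auto simp: N_def not_le)
        have "Cauchy (\<lambda>n. S n x)"
        proof (rule CauchyI)
          fix e :: real assume e: "e > 0"
          obtain q :: nat where q: "1 / Suc q < e / 2"
            using reals_Archimedean[of "e/2"] e by (auto simp: inverse_eq_divide)
          obtain m where m: "\<And>l. \<bar>S (m+l) x - S m x\<bar> < 1 / Suc q" using H by blast
          have m': "\<bar>S a x - S m x\<bar> < 1 / Suc q" if "a \<ge> m" for a
            using m[of "a - m"] that by simp
          show "\<exists>M. \<forall>a\<ge>M. \<forall>b\<ge>M. norm (S a x - S b x) < e"
          proof (intro exI allI impI)
            fix a b assume "a \<ge> m" "b \<ge> m"
            then have "\<bar>S a x - S m x\<bar> < e/2" "\<bar>S b x - S m x\<bar> < e/2" using m' q by fastforce+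
            then show "norm (S a x - S b x) < e" unfolding real_norm_def by (simp only: abs_less_iff) linarith
          qed
        qed
        then show False using x by (simp add: Cauchy_convergent_iff)
      qed
    qed
  qed
qed

end



lemma ce_sq:
  assumes P: "prob_space M" and F: "subalgebra M F"
    and X: "X \<in> borel_measurable M" "integrable M (\<lambda>x. (X x)\<^sup>2)"
  shows "integrable M (\<lambda>x. (real_cond_exp M F X x)\<^sup>2)"
    "(\<integral>x. (real_cond_exp M F X x)\<^sup>2 \<partial>M) \<le> (\<integral>x. (X x)\<^sup>2 \<partial>M)"
proof -
  interpret prob_space M by (rule P)
  interpret sigma_finite_subalgebra M F by (rule prob_sfs[OF P F])
  have iX: "integrable M X" by (rule sq_int_integrable[OF X])
  have cv: "convex_on UNIV (\<lambda>x::real. x\<^sup>2)" using convex_power2 by simp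
  show i1: "integrable M (\<lambda>x. (real_cond_exp M F X x)\<^sup>2)"
    using integrable_convex_cond_exp[OF iX _ _ X(2) cv, of 0 0] by simp
  have "AE x in M. (real_cond_exp M F X x)\<^sup>2 \<le> real_cond_exp M F (\<lambda>x. (X x)\<^sup>2) x"
    using real_cond_exp_jensens_inequality(2)[OF iX _ _ X(2) cv, of 0 0] by simp
  then have "(\<integral>x. (real_cond_exp M F X x)\<^sup>2 \<partial>M) \<le> (\<integral>x. real_cond_exp M F (\<lambda>x. (X x)\<^sup>2) x \<partial>M)"
    by (intro integral_mono_AE i1 real_cond_exp_int(1) X(2))
  also have "\<dots> = (\<integral>x. (X x)\<^sup>2 \<partial>M)" by (rule real_cond_exp_int(2)[OF X(2)])
  finally show "(\<integral>x. (real_cond_exp M F X x)\<^sup>2 \<partial>M) \<le> (\<integral>x. (X x)\<^sup>2 \<partial>M)" .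
qed

lemma mart_slln:
  assumes P: "prob_space M"
    and subG: "\<And>i. subalgebra M (G i)"
    and monoG: "\<And>i. sets (G i) \<subseteq> sets (G (Suc i))"
    and Dmeas: "\<And>i. D i \<in> borel_measurable (G i)"
    and Dsq: "\<And>i. integrable M (\<lambda>x. (D i x)\<^sup>2)"
    and Dce: "\<And>i. AE x in M. real_cond_exp M (G i) (D (Suc i)) x = 0"
    and bpos: "\<And>n. \<beta> n > 0" and inc: "incseq \<beta>" and binf: "filterlim \<beta> at_top sequentially"
    and sm: "summable (\<lambda>i. (\<integral>x. (D i x)\<^sup>2 \<partial>M) / (\<beta> i)\<^sup>2)"
  shows "AE x in M. (\<lambda>n. (\<Sum>t\<le>n. D t x) / \<beta> n) \<longlonglongrightarrow> 0"
proof -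
  interpret prob_space M by (rule P)
  define d where "d i x = D i x / \<beta> i" for i x
  have DM: "D i \<in> borel_measurable M" for i by (rule measurable_from_subalg[OF subG Dmeas])
  interpret mds M G d
  proof
    show "subalgebra M (G i)" for i by (rule subG)
    show "sets (G i) \<subseteq> sets (G (Suc i))" for i by (rule monoG)
    show "d i \<in> borel_measurable (G i)" for i unfolding d_def using Dmeas[of i] by measurable
    show "integrable M (\<lambda>x. (d i x)\<^sup>2)" for i
      unfolding d_def using Dsq[of i] by (simp add: power_divide)
    show "AE x in M. real_cond_exp M (G i) (d (Suc i)) x = 0" for i
    proof -
      interpret sigma_finite_subalgebra M "G i" by (rule prob_sfs[OF P subG])
      have "integrable M (D (Suc i))" by (rule sq_int_integrable[OF DM Dsq])
      from real_cond_exp_cdiv[OF this, of "\<beta> (Suc i)"] Dce[of i]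
      show ?thesis unfolding d_def by eventually_elim simp
    qed
  qed
  have "summable (\<lambda>i. (\<integral>x. (d i x)\<^sup>2 \<partial>M))"
    using sm unfolding d_def by (simp add: power_divide)
  from conv[OF this] show ?thesis
  proof eventually_elim
    case (elim x)
    then have "summable (\<lambda>i. D i x / \<beta> i)"
      by (simp add: S_def d_def summable_iff_convergent)
    then show ?case by (rule kronecker[OF bpos inc binf])
  qed
qed



lemma mix_part:
  fixes M :: "'a measure" and F :: "nat \<Rightarrow> 'a measure" and U :: "nat \<Rightarrow> 'a \<Rightarrow> real" and b :: "nat \<Rightarrow> real"
  assumes P: "prob_space M"
    and subF: "\<And>n. n \<ge> 1 \<Longrightarrow> subalgebra M (F n)"
    and monoF: "\<And>n m. 1 \<le> n \<Longrightarrow> n \<le> m \<Longrightarrow> sets (F n) \<subseteq> sets (F m)"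
    and UM: "\<And>n. n \<ge> 1 \<Longrightarrow> U n \<in> borel_measurable M"
    and Usq: "\<And>n. n \<ge> 1 \<Longrightarrow> integrable M (\<lambda>x. (U n x)\<^sup>2)"
    and bpos: "\<And>n. n \<ge> 1 \<Longrightarrow> b n > 0"
    and bmono: "\<And>n m. 1 \<le> n \<Longrightarrow> n \<le> m \<Longrightarrow> b n \<le> b m"
    and binf: "filterlim b at_top sequentially"
    and sm: "summable (\<lambda>n. (\<integral>x. (U (Suc n) x)\<^sup>2 \<partial>M) / (b (Suc n))\<^sup>2)"
    and jk: "j < k"
  shows "AE x in M. (\<lambda>p. (\<Sum>t\<le>p. real_cond_exp M (F (t+k+1-j)) (U (t+k+1)) x
                                  - real_cond_exp M (F (t+k-j)) (U (t+k+1)) x) / b (p+k+1)) \<longlonglongrightarrow> 0"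
proof -
  interpret prob_space M by (rule P)
  define CE where "CE m i = real_cond_exp M (F m) (U i)" for m i
  define D where "D t x = CE (t+k+1-j) (t+k+1) x - CE (t+k-j) (t+k+1) x" for t x
  define G where "G t = F (t+k+1-j)" for t
  have spF: "space (F n) = space M" if "n \<ge> 1" for n using subF[OF that] by (simp add: subalgebra_def)
  have CEsq: "integrable M (\<lambda>x. (CE m i x)\<^sup>2)" "(\<integral>x. (CE m i x)\<^sup>2 \<partial>M) \<le> (\<integral>x. (U i x)\<^sup>2 \<partial>M)"
    if "m \<ge> 1" "i \<ge> 1" for m i
    unfolding CE_def using ce_sq[OF P subF[OF that(1)] UM[OF that(2)] Usq[OF that(2)]] by auto
  have CEint: "integrable M (CE m i)" if "m \<ge> 1" "i \<ge> 1" for m i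
    unfolding CE_def
    using sigma_finite_subalgebra.real_cond_exp_int(1)[OF prob_sfs[OF P subF[OF that(1)]]
            sq_int_integrable[OF UM[OF that(2)] Usq[OF that(2)]]] .
  have CEM: "CE m i \<in> borel_measurable M" for m i unfolding CE_def by simp
  have "AE x in M. (\<lambda>p. (\<Sum>t\<le>p. D t x) / b (p+k+1)) \<longlonglongrightarrow> 0"
  proof (rule mart_slln[OF P])
    show "subalgebra M (G t)" for t unfolding G_def by (rule subF) (use jk in simp)
    show "sets (G t) \<subseteq> sets (G (Suc t))" for t unfolding G_def by (rule monoF) (use jk in auto)
    show "D t \<in> borel_measurable (G t)" for t
    proof -
      have "CE (t+k-j) (t+k+1) \<in> borel_measurable (F (t+k-j))" unfolding CE_def by simp
      then have "CE (t+k-j) (t+k+1) \<in> borel_measurable (G t)" unfolding G_def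
      proof (rule measurable_mono_sets[rotated 2])
        show "sets (F (t+k-j)) \<subseteq> sets (F (t+k+1-j))" by (rule monoF) (use jk in auto)
        show "space (F (t+k-j)) = space (F (t+k+1-j))" using spF[of "t+k-j"] spF[of "t+k+1-j"] jk by simp
      qed
      moreover have "CE (t+k+1-j) (t+k+1) \<in> borel_measurable (G t)" unfolding CE_def G_def by simp
      ultimately show ?thesis unfolding D_def by measurable
    qed
    show "integrable M (\<lambda>x. (D t x)\<^sup>2)" for t
      unfolding D_def by (rule sq_int_diff[OF CEM CEM CEsq(1) CEsq(1)]) (use jk in auto)
    show "AE x in M. real_cond_exp M (G t) (D (Suc t)) x = 0" for t
    proof -
      define a where "a = t + k + 1 - j"
      define i where "i = t + k + 2"
      have a1: "a \<ge> 1" using jk by (simp add: a_def)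
      have i1: "i \<ge> 1" by (simp add: i_def)
      have Deq: "D (Suc t) = (\<lambda>x. CE (Suc a) i x - CE a i x)"
        unfolding D_def a_def i_def using jk by (auto simp: Suc_diff_le)
      interpret sigma_finite_subalgebra M "F a" by (rule prob_sfs[OF P subF[OF a1]])
      have sub2: "subalgebra (F (Suc a)) (F a)"
        using monoF[of a "Suc a"] a1 spF[OF a1] spF[of "Suc a"] by (auto simp: subalgebra_def)
      have e1: "AE x in M. real_cond_exp M (F a) (\<lambda>x. CE (Suc a) i x - CE a i x) x
           = real_cond_exp M (F a) (CE (Suc a) i) x - real_cond_exp M (F a) (CE a i) x"
        by (rule real_cond_exp_diff) (use CEint a1 i1 in auto)
      have e2: "AE x in M. real_cond_exp M (F a) (CE (Suc a) i) x = CE a i x"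
        unfolding CE_def
        by (rule real_cond_exp_nested_subalg[OF subF sub2 sq_int_integrable[OF UM Usq]]) (use i1 in auto)
      have e3: "AE x in M. real_cond_exp M (F a) (CE a i) x = CE a i x"
        by (rule real_cond_exp_F_meas) (use CEint a1 i1 in \<open>auto simp: CE_def\<close>)
      from e1 e2 e3 show ?thesis unfolding Deq G_def a_def[symmetric] by eventually_elim simp
    qed
    show "b (n+k+1) > 0" for n by (rule bpos) simp
    show "incseq (\<lambda>n. b (n+k+1))" by (auto simp: incseq_def intro!: bmono)
    show "filterlim (\<lambda>n. b (n+k+1)) at_top sequentially"
      using filterlim_compose[OF binf filterlim_add_const_nat_at_top[of "k+1"]] by (simp add: add.assoc)
    show "summable (\<lambda>t. (\<integral>x. (D t x)\<^sup>2 \<partial>M) / (b (t+k+1))\<^sup>2)"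
    proof (rule summable_comparison_test)
      have "summable (\<lambda>n. (\<integral>x. (U (Suc (n + k)) x)\<^sup>2 \<partial>M) / (b (Suc (n+k)))\<^sup>2)"
        using summable_iff_shift[of "\<lambda>n. (\<integral>x. (U (Suc n) x)\<^sup>2 \<partial>M) / (b (Suc n))\<^sup>2" k] sm by simp
      then show "summable (\<lambda>t. 4 * ((\<integral>x. (U (t+k+1) x)\<^sup>2 \<partial>M) / (b (t+k+1))\<^sup>2))"
        by (intro summable_mult) simp
      show "\<exists>N. \<forall>t\<ge>N. norm ((\<integral>x. (D t x)\<^sup>2 \<partial>M) / (b (t+k+1))\<^sup>2)
               \<le> 4 * ((\<integral>x. (U (t+k+1) x)\<^sup>2 \<partial>M) / (b (t+k+1))\<^sup>2)"
      proof (intro exI allI impI)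
        fix t :: nat
        let ?A = "CE (t+k+1-j) (t+k+1)" and ?B = "CE (t+k-j) (t+k+1)"
        have m1: "t+k+1-j \<ge> 1" "t+k-j \<ge> 1" "t+k+1 \<ge> 1" using jk by auto
        have "(\<integral>x. (D t x)\<^sup>2 \<partial>M) \<le> (\<integral>x. 2 * (?A x)\<^sup>2 + 2 * (?B x)\<^sup>2 \<partial>M)"
        proof (rule integral_mono)
          show "integrable M (\<lambda>x. (D t x)\<^sup>2)"
            unfolding D_def by (rule sq_int_diff[OF CEM CEM CEsq(1) CEsq(1)]) (use m1 in auto)
          show "integrable M (\<lambda>x. 2 * (?A x)\<^sup>2 + 2 * (?B x)\<^sup>2)" using CEsq(1)[OF m1(1,3)] CEsq(1)[OF m1(2,3)] by simp
          fix x
          have "0 \<le> (?A x + ?B x)\<^sup>2" by simp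
          then show "(D t x)\<^sup>2 \<le> 2 * (?A x)\<^sup>2 + 2 * (?B x)\<^sup>2"
            unfolding D_def by (simp add: power2_eq_square algebra_simps)
        qed
        also have "\<dots> = 2 * (\<integral>x. (?A x)\<^sup>2 \<partial>M) + 2 * (\<integral>x. (?B x)\<^sup>2 \<partial>M)"
          using CEsq(1)[OF m1(1,3)] CEsq(1)[OF m1(2,3)] by simp
        also have "\<dots> \<le> 4 * (\<integral>x. (U (t+k+1) x)\<^sup>2 \<partial>M)"
          using CEsq(2)[OF m1(1,3)] CEsq(2)[OF m1(2,3)] by simp
        finally have "(\<integral>x. (D t x)\<^sup>2 \<partial>M) \<le> 4 * (\<integral>x. (U (t+k+1) x)\<^sup>2 \<partial>M)" .
        moreover have "0 \<le> (\<integral>x. (D t x)\<^sup>2 \<partial>M)" by simp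
        moreover have "(b (t+k+1))\<^sup>2 > 0" using bpos[of "t+k+1"] by simp
        ultimately show "norm ((\<integral>x. (D t x)\<^sup>2 \<partial>M) / (b (t+k+1))\<^sup>2)
               \<le> 4 * ((\<integral>x. (U (t+k+1) x)\<^sup>2 \<partial>M) / (b (t+k+1))\<^sup>2)"
          by (simp add: divide_right_mono)
      qed
    qed
  qed
  then show ?thesis unfolding D_def CE_def .
qed



lemma split_sum_nat:
  fixes g :: "nat \<Rightarrow> real"
  shows "(\<Sum>i=1..p+k+1. g i) = (\<Sum>i=1..k. g i) + (\<Sum>t\<le>p. g (t+k+1))"
  by (induction p) (simp_all add: sum.cl_ivl_Suc)

theorem lemma12:
  fixes M :: "'a measure" and F :: "nat \<Rightarrow> 'a measure"
    and U :: "nat \<Rightarrow> 'a \<Rightarrow> real" and b :: "nat \<Rightarrow> real"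
  assumes "prob_space M"
    and "is_filtration M F"
    and "star_submixing M F U"
    and "\<And>n. n \<ge> 1 \<Longrightarrow> integrable M (U n)"
    and "\<And>n. n \<ge> 1 \<Longrightarrow> (\<integral>x. U n x \<partial>M) = 0"
    and "\<And>n. n \<ge> 1 \<Longrightarrow> integrable M (\<lambda>x. (U n x)\<^sup>2)"
    and "\<And>n. n \<ge> 1 \<Longrightarrow> b n > 0"
    and "\<And>n m. 1 \<le> n \<Longrightarrow> n \<le> m \<Longrightarrow> b n \<le> b m"
    and "filterlim b at_top sequentially"
    and "summable (\<lambda>n. (\<integral>x. (U (Suc n) x)\<^sup>2 \<partial>M) / (b (Suc n))\<^sup>2)"
    and "bdd_above ((\<lambda>n. (\<Sum>i=1..n. \<integral>x. \<bar>U i x\<bar> \<partial>M) / b n) ` {1..})"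
  shows "AE x in M. (\<lambda>n. (\<Sum>i=1..n. U i x) / b n) \<longlonglongrightarrow> 0"
proof -
  note P = assms(1)
  interpret prob_space M by (rule P)
  have subF: "\<And>n. n \<ge> 1 \<Longrightarrow> subalgebra M (F n)"
    and monoF: "\<And>n m. 1 \<le> n \<Longrightarrow> n \<le> m \<Longrightarrow> sets (F n) \<subseteq> sets (F m)"
    using assms(2) by (auto simp: is_filtration_def)
  obtain N f where Umeas: "\<And>n. n \<ge> 1 \<Longrightarrow> U n \<in> borel_measurable (F n)"
    and N1: "N \<ge> 1" and fpos: "\<And>n. n \<ge> N \<Longrightarrow> f n \<ge> 0" and f0: "f \<longlonglongrightarrow> 0"
    and mix: "\<And>n m. n \<ge> N \<Longrightarrow> m \<ge> 1 \<Longrightarrow>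
           (AE x in M. \<bar>real_cond_exp M (F m) (U (n + m)) x - (\<integral>y. U (n + m) y \<partial>M)\<bar>
                        \<le> f n * (\<integral>y. \<bar>U (n + m) y\<bar> \<partial>M))"
    using assms(3) unfolding star_submixing_def by blast
  have UM: "U n \<in> borel_measurable M" if "n \<ge> 1" for n
    by (rule measurable_from_subalg[OF subF[OF that] Umeas[OF that]])
  define CE where "CE m i = real_cond_exp M (F m) (U i)" for m i
  obtain C where C: "\<And>n. n \<ge> 1 \<Longrightarrow> (\<Sum>i=1..n. \<integral>x. \<bar>U i x\<bar> \<partial>M) / b n \<le> C"
    using assms(11) unfolding bdd_above_def by auto
  define Cp where "Cp = max C 0 + 1"
  have Cp: "Cp > 0" "C \<le> Cp" by (auto simp: Cp_def)
  have AE1: "AE x in M. \<forall>i. 1 \<le> i \<longrightarrow> CE i i x = U i x"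
  proof (subst AE_all_countable, intro allI)
    fix i :: nat
    show "AE x in M. 1 \<le> i \<longrightarrow> CE i i x = U i x"
    proof (cases "1 \<le> i")
      case True
      interpret sigma_finite_subalgebra M "F i" by (rule prob_sfs[OF P subF[OF True]])
      have "AE x in M. CE i i x = U i x" unfolding CE_def
        by (rule real_cond_exp_F_meas[OF assms(4)[OF True] Umeas[OF True]])
      then show ?thesis by auto
    qed simp
  qed
  have AE2: "AE x in M. \<forall>n m. n \<ge> N \<longrightarrow> m \<ge> 1 \<longrightarrow> \<bar>CE m (n + m) x\<bar> \<le> f n * (\<integral>y. \<bar>U (n + m) y\<bar> \<partial>M)"
  proof (subst AE_all_countable, intro allI, subst AE_all_countable, intro allI)
    fix n m :: nat
    show "AE x in M. n \<ge> N \<longrightarrow> m \<ge> 1 \<longrightarrow> \<bar>CE m (n + m) x\<bar> \<le> f n * (\<integral>y. \<bar>U (n + m) y\<bar> \<partial>M)"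
    proof (cases "n \<ge> N \<and> m \<ge> 1")
      case True
      then have "AE x in M. \<bar>CE m (n + m) x\<bar> \<le> f n * (\<integral>y. \<bar>U (n + m) y\<bar> \<partial>M)"
        using mix[of n m] assms(5)[of "n+m"] by (simp add: CE_def)
      then show ?thesis by auto
    qed auto
  qed
  define D where "D k j t x = CE (t+k+1-j) (t+k+1) x - CE (t+k-j) (t+k+1) x" for k j t x
  have AE3: "AE x in M. \<forall>k j. j < k \<longrightarrow> (\<lambda>p. (\<Sum>t\<le>p. D k j t x) / b (p+k+1)) \<longlonglongrightarrow> 0"
  proof (subst AE_all_countable, intro allI, subst AE_all_countable, intro allI)
    fix k j :: nat
    show "AE x in M. j < k \<longrightarrow> (\<lambda>p. (\<Sum>t\<le>p. D k j t x) / b (p+k+1)) \<longlonglongrightarrow> 0"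
    proof (cases "j < k")
      case True
      have "AE x in M. (\<lambda>p. (\<Sum>t\<le>p. D k j t x) / b (p+k+1)) \<longlonglongrightarrow> 0"
        unfolding D_def CE_def
        by (rule mix_part[OF P subF monoF UM assms(6) assms(7) assms(8) assms(9) assms(10) True])
      then show ?thesis by auto
    qed auto
  qed
  have bsh: "filterlim (\<lambda>p. b (p+k+1)) at_top sequentially" for k
    using filterlim_compose[OF assms(9) filterlim_add_const_nat_at_top[of "k+1"]] by (simp add: add.assoc)
  from AE1 AE2 AE3 show ?thesis
  proof eventually_elim
    case (elim x)
    note E1 = elim(1)[rule_format] and E2 = elim(2)[rule_format] and E3 = elim(3)[rule_format]
    show ?case
    proof (rule LIMSEQ_I)
      fix e :: real assume e: "e > 0"
      obtain k0 where k0: "\<And>k. k \<ge> k0 \<Longrightarrow> \<bar>f k\<bar> < e / (2 * Cp)"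
        using LIMSEQ_D[OF f0, of "e / (2 * Cp)"] e Cp by auto
      define k where "k = max k0 N"
      have kN: "k \<ge> N" and fk: "\<bar>f k\<bar> < e / (2 * Cp)" using k0[of k] by (auto simp: k_def)
      have fk0: "f k \<ge> 0" by (rule fpos[OF kN])
      define R where "R p = (\<Sum>i=1..k. U i x) / b (p+k+1) + (\<Sum>j<k. (\<Sum>t\<le>p. D k j t x) / b (p+k+1))" for p
      have R0: "R \<longlonglongrightarrow> 0"
      proof -
        have "(\<lambda>p. (\<Sum>i=1..k. U i x) * inverse (b (p+k+1))) \<longlonglongrightarrow> (\<Sum>i=1..k. U i x) * 0"
          by (intro tendsto_mult tendsto_const tendsto_inverse_0_at_top bsh)
        moreover have "(\<lambda>p. \<Sum>j<k. (\<Sum>t\<le>p. D k j t x) / b (p+k+1)) \<longlonglongrightarrow> 0"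
          by (rule tendsto_null_sum) (use E3 in auto)
        ultimately show ?thesis unfolding R_def using tendsto_add by (fastforce simp: divide_inverse)
      qed
      obtain p0 where p0: "\<And>p. p \<ge> p0 \<Longrightarrow> \<bar>R p\<bar> < e/2"
        using LIMSEQ_D[OF R0, of "e/2"] e by auto
      show "\<exists>no. \<forall>n\<ge>no. norm ((\<Sum>i=1..n. U i x) / b n - 0) < e"
      proof (intro exI allI impI)
        fix n assume n: "n \<ge> p0 + k + 1"
        define p where "p = n - k - 1"
        have np: "n = p + k + 1" and pp0: "p \<ge> p0" using n by (auto simp: p_def)
        have bn: "b n > 0" using assms(7)[of n] n by simp
        have tele: "U (t+k+1) x = CE (t+1) (t+k+1) x + (\<Sum>j<k. D k j t x)" for t
        proof -
          have "(\<Sum>j<k. D k j t x) = (\<Sum>j<k. CE (t+k+1-j) (t+k+1) x - CE (t+k+1 - Suc j) (t+k+1) x)"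
            unfolding D_def by (intro sum.cong) auto
          also have "\<dots> = CE (t+k+1-0) (t+k+1) x - CE (t+k+1-k) (t+k+1) x"
            by (rule sum_lessThan_telescope')
          finally show ?thesis using E1[of "t+k+1"] by simp
        qed
        have sumeq: "(\<Sum>i=1..n. U i x) = (\<Sum>i=1..k. U i x) + (\<Sum>j<k. \<Sum>t\<le>p. D k j t x) + (\<Sum>t\<le>p. CE (t+1) (t+k+1) x)"
          unfolding np split_sum_nat tele sum.distrib by (simp add: sum.swap[of _ "{..<k}"])
        have eq: "(\<Sum>i=1..n. U i x) / b n = R p + (\<Sum>t\<le>p. CE (t+1) (t+k+1) x) / b n"
          unfolding sumeq R_def by (simp add: np add_divide_distrib sum_divide_distrib)
        have "\<bar>\<Sum>t\<le>p. CE (t+1) (t+k+1) x\<bar> \<le> (\<Sum>t\<le>p. f k * (\<integral>y. \<bar>U (t+k+1) y\<bar> \<partial>M))"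
        proof (rule order_trans[OF sum_abs], rule sum_mono)
          fix t assume "t \<in> {..p}"
          show "\<bar>CE (t+1) (t+k+1) x\<bar> \<le> f k * (\<integral>y. \<bar>U (t+k+1) y\<bar> \<partial>M)"
            using E2[OF kN, of "t+1"] by (simp add: ac_simps)
        qed
        also have "\<dots> = f k * (\<Sum>t\<le>p. (\<integral>y. \<bar>U (t+k+1) y\<bar> \<partial>M))" by (simp add: sum_distrib_left)
        also have "\<dots> \<le> f k * (\<Sum>i=1..n. \<integral>y. \<bar>U i y\<bar> \<partial>M)"
        proof (rule mult_left_mono[OF _ fk0])
          have "(\<Sum>i=1..n. \<integral>y. \<bar>U i y\<bar> \<partial>M) = (\<Sum>i=1..k. \<integral>y. \<bar>U i y\<bar> \<partial>M) + (\<Sum>t\<le>p. (\<integral>y. \<bar>U (t+k+1) y\<bar> \<partial>M))"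
            unfolding np by (rule split_sum_nat)
          moreover have "0 \<le> (\<Sum>i=1..k. \<integral>y. \<bar>U i y\<bar> \<partial>M)" by (intro sum_nonneg) simp
          ultimately show "(\<Sum>t\<le>p. (\<integral>y. \<bar>U (t+k+1) y\<bar> \<partial>M)) \<le> (\<Sum>i=1..n. \<integral>y. \<bar>U i y\<bar> \<partial>M)" by simp
        qed
        also have "\<dots> \<le> f k * (C * b n)"
        proof (rule mult_left_mono[OF _ fk0])
          show "(\<Sum>i=1..n. \<integral>y. \<bar>U i y\<bar> \<partial>M) \<le> C * b n"
            using C[of n] n bn by (simp add: pos_divide_le_eq)
        qed
        also have "\<dots> \<le> f k * (Cp * b n)"
          using Cp bn fk0 by (intro mult_left_mono mult_right_mono) auto
        finally have B: "\<bar>(\<Sum>t\<le>p. CE (t+1) (t+k+1) x) / b n\<bar> \<le> f k * Cp"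
          using bn by (simp add: abs_div pos_divide_le_eq mult.assoc)
        have "f k * Cp < e/2" using fk fk0 Cp by (simp add: pos_less_divide_eq algebra_simps)
        then have "\<bar>(\<Sum>i=1..n. U i x) / b n\<bar> < e"
          unfolding eq using p0[OF pp0] B by linarith
        then show "norm ((\<Sum>i=1..n. U i x) / b n - 0) < e" by simp
      qed
    qed
  qed
qed


end
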